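(* Let $\{\varphi_n\}$ and $\{\psi_n\}$ be biorthogonal sequences in a Hilbert space $\mathcal H$ and let $\mathcal D$ be a dense subspace of $\mathcal H$ such that $D_\varphi\cup D_\psi\subseteq\mathcal D\subseteq D(\varphi)\cap D(\psi)$. Then the following are equivalent: (i) $(\{\varphi_n\},\{\psi_n\})$ is a $\mathcal D$-quasi basis, i.e. $\sum_{k=0}^\infty\langle x,\varphi_k\rangle\langle\psi_k,y\rangle=\langle x,y\rangle$ for all $x,y\in\mathcal D$. (ii) For any ONB $\{e_n\}$ of $\mathcal H$, $\{\varphi_n\}$ is a generalized Riesz system with a natural constructing pair $(\{e_n\},T)$ satisfying $D(T^* )\cap D(T^{-1})\supseteq\mathcal D$. (iii) For any ONB $\{e_n\}$ of $\mathcal H$, $\{\psi_n\}$ is a generalized Riesz system with a natural constructing pair $(\{e_n\},K)$ satisfying $D(K^* )\cap D(K^{-1})\supseteq\mathcal D$. If (i) holds, then one can take $T=(\overline{T_{e,\psi}|_{\mathcal D}})^{-1}$ in (ii) and $K=(\overline{T_{e,\varphi}|_{\mathcal D}})^{-1}$ in (iii).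
   Context: Inner product $\langle\cdot,\cdot\rangle$ is linear in the first argument. Biorthogonal: $\langle\varphi_n,\psi_m\rangle=\delta_{nm}$. $D_\varphi$, $D_\psi$ are the linear spans of $\{\varphi_n\}$, $\{\psi_n\}$. $D(\varphi)=\{x:\sum_n|\langle x,\varphi_n\rangle|^2<\infty\}$, similarly $D(\psi)$. A sequence $\{\varphi_n\}$ is a generalized Riesz system if there exist an ONB $\{e_n\}$ and a densely defined closed operator $T$ with densely defined inverse such that $e_n\in D(T)\cap D((T^{-1})^* )$ and $Te_n=\varphi_n$ for all $n$; $(\{e_n\},T)$ is a constructing pair. It is natural for $(\{\varphi_n\},\{\psi_n\})$ if $\psi_n=(T^{-1})^*e_n$ for all $n$ (analogously a constructing pair $(\{e_n\},K)$ for $\{\psi_n\}$ is natural if $\varphi_n=(K^{-1})^*e_n$). $T_{e,\varphi}$ is the operator with domain $D(\varphi)$, $T_{e,\varphi}x=\sum_n\langle x,\varphi_n\rangle e_n$; similarly $T_{e,\psi}$ on $D(\psi)$. Bars denote closures, $|_{\mathcal D}$ restrictions. *)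

theory Defs
  imports Complex_Main
begin

text \<open>A complex inner product space (inner product linear in the first argument)
  which is complete w.r.t. the induced norm.\<close>

class complex_hilbert = ab_group_add +
  fixes scaleC :: "complex \<Rightarrow> 'a \<Rightarrow> 'a" (infixr \<open>*\<^sub>C\<close> 75)
    and cinner :: "'a \<Rightarrow> 'a \<Rightarrow> complex"
  assumes scaleC_add_right: "a *\<^sub>C (x + y) = a *\<^sub>C x + a *\<^sub>C y"
    and scaleC_add_left: "(a + b) *\<^sub>C x = a *\<^sub>C x + b *\<^sub>C x"
    and scaleC_scaleC: "a *\<^sub>C (b *\<^sub>C x) = (a * b) *\<^sub>C x"
    and scaleC_one: "1 *\<^sub>C x = x"
    and cinner_add_left: "cinner (x + y) z = cinner x z + cinner y z"
    and cinner_scaleC_left: "cinner (a *\<^sub>C x) y = a * cinner x y"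
    and cinner_conj_sym: "cinner y x = cnj (cinner x y)"
    and cinner_nonneg: "0 \<le> Re (cinner x x)"
    and cinner_eq_zero: "cinner x x = 0 \<Longrightarrow> x = 0"
    and hilbert_complete:
      "(\<forall>e>0. \<exists>N. \<forall>m\<ge>N. \<forall>n\<ge>N. sqrt (Re (cinner (X m - X n) (X m - X n))) < e)
        \<Longrightarrow> (\<exists>L. (\<lambda>n. sqrt (Re (cinner (X n - L) (X n - L)))) \<longlonglongrightarrow> 0)"

definition cnorm :: "'a::complex_hilbert \<Rightarrow> real" where
  "cnorm x = sqrt (Re (cinner x x))"

definition hclosure :: "'a::complex_hilbert set \<Rightarrow> 'a set" where
  "hclosure S = {x. \<forall>e>0. \<exists>y\<in>S. cnorm (x - y) < e}"

definition hdense :: "'a::complex_hilbert set \<Rightarrow> bool" where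
  "hdense S \<longleftrightarrow> hclosure S = UNIV"

definition csubspace :: "'a::complex_hilbert set \<Rightarrow> bool" where
  "csubspace S \<longleftrightarrow> 0 \<in> S \<and> (\<forall>x\<in>S. \<forall>y\<in>S. x + y \<in> S) \<and> (\<forall>a. \<forall>x\<in>S. a *\<^sub>C x \<in> S)"

definition seq_span :: "(nat \<Rightarrow> 'a::complex_hilbert) \<Rightarrow> 'a set" where
  "seq_span f = {x. \<exists>F c. finite F \<and> x = (\<Sum>i\<in>F. c i *\<^sub>C f i)}"

definition seq_dom :: "(nat \<Rightarrow> 'a::complex_hilbert) \<Rightarrow> 'a set" where
  "seq_dom f = {x. summable (\<lambda>n. (cmod (cinner x (f n)))\<^sup>2)}"

definition biorthogonal :: "(nat \<Rightarrow> 'a::complex_hilbert) \<Rightarrow> (nat \<Rightarrow> 'a) \<Rightarrow> bool" where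
  "biorthogonal \<phi> \<psi> \<longleftrightarrow> (\<forall>n m. cinner (\<phi> n) (\<psi> m) = (if n = m then 1 else 0))"

definition ONB :: "(nat \<Rightarrow> 'a::complex_hilbert) \<Rightarrow> bool" where
  "ONB e \<longleftrightarrow> (\<forall>n m. cinner (e n) (e m) = (if n = m then 1 else 0)) \<and> hdense (seq_span e)"

definition quasi_basis :: "'a::complex_hilbert set \<Rightarrow> (nat \<Rightarrow> 'a) \<Rightarrow> (nat \<Rightarrow> 'a) \<Rightarrow> bool" where
  "quasi_basis D \<phi> \<psi> \<longleftrightarrow>
     (\<forall>x\<in>D. \<forall>y\<in>D. (\<lambda>k. cinner x (\<phi> k) * cinner (\<psi> k) y) sums cinner x y)"

text \<open>An operator \<open>T\<close> is identified with its graph \<open>G \<subseteq> H \<times> H\<close>; \<open>(x, y) \<in> G\<close> means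
  \<open>x \<in> D(T)\<close> and \<open>T x = y\<close>. \<open>D(T) = Domain G\<close>, range \<open>= Range G\<close>,
  the inverse is the converse graph, restriction to \<open>D\<close> is \<open>G \<inter> (D \<times> UNIV)\<close>.\<close>

definition is_operator :: "('a::complex_hilbert \<times> 'a) set \<Rightarrow> bool" where
  "is_operator G \<longleftrightarrow>
     (\<forall>x y z. (x, y) \<in> G \<longrightarrow> (x, z) \<in> G \<longrightarrow> y = z) \<and>
     (0, 0) \<in> G \<and>
     (\<forall>x y u v. (x, y) \<in> G \<longrightarrow> (u, v) \<in> G \<longrightarrow> (x + u, y + v) \<in> G) \<and>
     (\<forall>a x y. (x, y) \<in> G \<longrightarrow> (a *\<^sub>C x, a *\<^sub>C y) \<in> G)"

definition graph_closure :: "('a::complex_hilbert \<times> 'a) set \<Rightarrow> ('a \<times> 'a) set" where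
  "graph_closure G = {(x, y). \<forall>e>0. \<exists>(u, v)\<in>G. cnorm (x - u) < e \<and> cnorm (y - v) < e}"

definition closed_operator :: "('a::complex_hilbert \<times> 'a) set \<Rightarrow> bool" where
  "closed_operator G \<longleftrightarrow> is_operator G \<and> graph_closure G = G"

definition densely_defined :: "('a::complex_hilbert \<times> 'a) set \<Rightarrow> bool" where
  "densely_defined G \<longleftrightarrow> is_operator G \<and> hdense (Domain G)"

definition adjoint :: "('a::complex_hilbert \<times> 'a) set \<Rightarrow> ('a \<times> 'a) set" where
  "adjoint G = {(y, z). \<forall>(x, w)\<in>G. cinner w y = cinner x z}"

definition constructing_pair ::
    "(nat \<Rightarrow> 'a::complex_hilbert) \<Rightarrow> ('a \<times> 'a) set \<Rightarrow> (nat \<Rightarrow> 'a) \<Rightarrow> bool" where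
  "constructing_pair e T \<phi> \<longleftrightarrow>
     ONB e \<and> closed_operator T \<and> densely_defined T \<and> densely_defined (converse T) \<and>
     (\<forall>n. (e n, \<phi> n) \<in> T \<and> e n \<in> Domain (adjoint (converse T)))"

definition generalized_Riesz :: "(nat \<Rightarrow> 'a::complex_hilbert) \<Rightarrow> bool" where
  "generalized_Riesz \<phi> \<longleftrightarrow> (\<exists>e T. constructing_pair e T \<phi>)"

text \<open>A constructing pair \<open>({e_n}, T)\<close> of \<open>{\<phi>_n}\<close> is natural for \<open>({\<phi>_n},{\<psi>_n})\<close> if
  \<open>\<psi>_n = (T\<^sup>-\<^sup>1)\<^sup>* e_n\<close>.  (The same definition with the roles of the sequences exchanged
  gives naturality of a constructing pair \<open>({e_n}, K)\<close> of \<open>{\<psi>_n}\<close>.)\<close>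
definition natural_pair ::
    "(nat \<Rightarrow> 'a::complex_hilbert) \<Rightarrow> ('a \<times> 'a) set \<Rightarrow> (nat \<Rightarrow> 'a) \<Rightarrow> (nat \<Rightarrow> 'a) \<Rightarrow> bool" where
  "natural_pair e T \<phi> \<psi> \<longleftrightarrow>
     constructing_pair e T \<phi> \<and> (\<forall>n. (e n, \<psi> n) \<in> adjoint (converse T))"

definition T_seq :: "(nat \<Rightarrow> 'a::complex_hilbert) \<Rightarrow> (nat \<Rightarrow> 'a) \<Rightarrow> ('a \<times> 'a) set" where
  "T_seq e \<phi> = {(x, y). x \<in> seq_dom \<phi> \<and>
      (\<lambda>n. cnorm ((\<Sum>k<n. cinner x (\<phi> k) *\<^sub>C e k) - y)) \<longlonglongrightarrow> 0}"

definition restrict_op :: "('a \<times> 'a) set \<Rightarrow> 'a set \<Rightarrow> ('a \<times> 'a) set" where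
  "restrict_op G D = G \<inter> (D \<times> UNIV)"

end

theory Submission
  imports Defs
begin

lemma cinner_zero_left[simp]: "cinner 0 (y::'a::complex_hilbert) = 0"
  using cinner_add_left[of "0::'a" 0 y] by simp

lemma cinner_minus_left: "cinner (- x) (y::'a::complex_hilbert) = - cinner x y"
  using cinner_add_left[of x "-x" y] by (simp add: eq_neg_iff_add_eq_0 add.commute)

lemma cinner_diff_left: "cinner (x - z) (y::'a::complex_hilbert) = cinner x y - cinner z y"
  using cinner_add_left[of x "-z" y] by (simp add: cinner_minus_left)

lemma cinner_add_right: "cinner x (y + z::'a::complex_hilbert) = cinner x y + cinner x z"
  by (metis cinner_add_left cinner_conj_sym complex_cnj_add)

lemma cinner_zero_right[simp]: "cinner x (0::'a::complex_hilbert) = 0"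
  by (metis cinner_conj_sym cinner_zero_left complex_cnj_zero)

lemma cinner_minus_right: "cinner x (- y::'a::complex_hilbert) = - cinner x y"
  by (metis cinner_conj_sym cinner_minus_left complex_cnj_minus)

lemma cinner_diff_right: "cinner x (y - z::'a::complex_hilbert) = cinner x y - cinner x z"
  by (metis cinner_conj_sym cinner_diff_left complex_cnj_diff)

lemma cinner_scaleC_right: "cinner x (a *\<^sub>C y::'a::complex_hilbert) = cnj a * cinner x y"
  by (metis cinner_conj_sym cinner_scaleC_left complex_cnj_mult)

lemma cinner_sum_left: "cinner (\<Sum>i\<in>A. f i) (y::'a::complex_hilbert) = (\<Sum>i\<in>A. cinner (f i) y)"
  by (induction A rule: infinite_finite_induct) (auto simp: cinner_add_left)

lemma cinner_sum_right: "cinner y (\<Sum>i\<in>A. f i::'a::complex_hilbert) = (\<Sum>i\<in>A. cinner y (f i))"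
  by (induction A rule: infinite_finite_induct) (auto simp: cinner_add_right)

lemma scaleC_zero_right[simp]: "a *\<^sub>C (0::'a::complex_hilbert) = 0"
  using scaleC_add_right[of a "0::'a" 0] by simp

lemma scaleC_zero_left[simp]: "0 *\<^sub>C (x::'a::complex_hilbert) = 0"
  using scaleC_add_left[of 0 0 x] by simp

lemma scaleC_minus_left: "(- a) *\<^sub>C (x::'a::complex_hilbert) = - (a *\<^sub>C x)"
  using scaleC_add_left[of a "-a" x] by (simp add: eq_neg_iff_add_eq_0 add.commute)

lemma scaleC_minus_right: "a *\<^sub>C (- x::'a::complex_hilbert) = - (a *\<^sub>C x)"
  using scaleC_add_right[of a x "-x"] by (simp add: eq_neg_iff_add_eq_0 add.commute)

lemma scaleC_diff_right: "a *\<^sub>C (x - y::'a::complex_hilbert) = a *\<^sub>C x - a *\<^sub>C y"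
  using scaleC_add_right[of a x "-y"] by (simp add: scaleC_minus_right)

lemma scaleC_diff_left: "(a - b) *\<^sub>C (x::'a::complex_hilbert) = a *\<^sub>C x - b *\<^sub>C x"
  using scaleC_add_left[of a "-b" x] by (simp add: scaleC_minus_left)

lemma scaleC_sum_right: "a *\<^sub>C (\<Sum>i\<in>A. f i) = (\<Sum>i\<in>A. a *\<^sub>C (f i::'a::complex_hilbert))"
  by (induction A rule: infinite_finite_induct) (auto simp: scaleC_add_right)

lemma scaleC_minus1: "(-1) *\<^sub>C (x::'a::complex_hilbert) = - x"
  by (simp add: scaleC_minus_left scaleC_one)

lemma cinner_self_Im: "Im (cinner x (x::'a::complex_hilbert)) = 0"
proof -
  have "Im (cinner x x) = Im (cnj (cinner x x))" using cinner_conj_sym[of x x] by simp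
  then show ?thesis by simp
qed

lemma cinner_self_real: "cinner x (x::'a::complex_hilbert) = complex_of_real (Re (cinner x x))"
  using cinner_self_Im[of x] by (simp add: complex_eq_iff)

lemma cnorm_nonneg[simp]: "0 \<le> cnorm x"
  by (simp add: cnorm_def cinner_nonneg)

lemma cnorm_sq: "(cnorm x)\<^sup>2 = Re (cinner x x)"
  by (simp add: cnorm_def cinner_nonneg)

lemma cnorm_zero[simp]: "cnorm (0::'a::complex_hilbert) = 0"
  by (simp add: cnorm_def)

lemma cnorm_eq_0[simp]: "cnorm x = 0 \<longleftrightarrow> x = (0::'a::complex_hilbert)"
proof
  assume "cnorm x = 0"
  then have "Re (cinner x x) = 0" using cnorm_sq[of x] by simp
  then have "cinner x x = 0" using cinner_self_real[of x] by simp
  then show "x = 0" by (rule cinner_eq_zero)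
qed simp

lemma cnorm_minus: "cnorm (- x::'a::complex_hilbert) = cnorm x"
  by (simp add: cnorm_def cinner_minus_left cinner_minus_right)

lemma cnorm_minus_commute: "cnorm (x - y::'a::complex_hilbert) = cnorm (y - x)"
  by (metis cnorm_minus minus_diff_eq)

lemma cnorm_scaleC: "cnorm (a *\<^sub>C x::'a::complex_hilbert) = cmod a * cnorm x"
proof -
  have "cinner (a *\<^sub>C x) (a *\<^sub>C x) = (a * cnj a) * cinner x x"
    by (simp add: cinner_scaleC_left cinner_scaleC_right)
  also have "a * cnj a = complex_of_real ((cmod a)\<^sup>2)"
    using complex_norm_square[of a] by simp
  finally have "Re (cinner (a *\<^sub>C x) (a *\<^sub>C x)) = (cmod a)\<^sup>2 * Re (cinner x x)"
    by (subst (asm) cinner_self_real) (simp del: of_real_power)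
  then show ?thesis by (simp add: cnorm_def real_sqrt_mult)
qed

lemma cauchy_schwarz: "cmod (cinner x y) \<le> cnorm x * cnorm (y::'a::complex_hilbert)"
proof (cases "y = 0")
  case True then show ?thesis by simp
next
  case False
  define r where "r = Re (cinner y y)"
  have yy: "cinner y y = complex_of_real r" unfolding r_def by (rule cinner_self_real)
  have "r \<noteq> 0" using False yy cinner_eq_zero by force
  moreover have "r \<ge> 0" unfolding r_def by (rule cinner_nonneg)
  ultimately have rpos: "r > 0" by simp
  define c where "c = cinner x y"
  define t where "t = c / complex_of_real r"
  have yx: "cinner y x = cnj c" unfolding c_def by (rule cinner_conj_sym)
  have e: "cinner (x - t *\<^sub>C y) (x - t *\<^sub>C y) = cinner x x - cnj t * c - t * cnj c + t * cnj t * cinner y y"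
    by (simp add: cinner_diff_left cinner_diff_right cinner_scaleC_left cinner_scaleC_right yx c_def[symmetric] algebra_simps)
  also have "\<dots> = cinner x x - c * cnj c / complex_of_real r"
    using rpos by (simp add: t_def yy field_simps)
  also have "c * cnj c = complex_of_real ((cmod c)\<^sup>2)"
    using complex_norm_square[of c] by simp
  finally have "Re (cinner (x - t *\<^sub>C y) (x - t *\<^sub>C y)) = Re (cinner x x) - (cmod c)\<^sup>2 / r"
    by (simp del: of_real_power add: Re_divide_of_real)
  with cinner_nonneg[of "x - t *\<^sub>C y"] have "(cmod c)\<^sup>2 / r \<le> Re (cinner x x)" by simp
  then have "(cmod c)\<^sup>2 \<le> Re (cinner x x) * r" using rpos by (simp add: divide_le_eq)
  also have "\<dots> = (cnorm x * cnorm y)\<^sup>2" by (simp add: power_mult_distrib cnorm_sq r_def)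
  finally show ?thesis unfolding c_def
    by (meson cnorm_nonneg mult_nonneg_nonneg power2_le_imp_le)
qed

lemma cnorm_triangle: "cnorm (x + y) \<le> cnorm x + cnorm (y::'a::complex_hilbert)"
proof -
  have 1: "Re (cinner (x + y) (x + y)) = Re (cinner x x) + Re (cinner y y) + Re (cinner x y) + Re (cinner y x)"
    by (simp add: cinner_add_left cinner_add_right)
  have 2: "Re (cinner y x) = Re (cinner x y)" using cinner_conj_sym[of y x] by simp
  have 3: "Re (cinner x y) \<le> cnorm x * cnorm y"
    using cauchy_schwarz[of x y] complex_Re_le_cmod[of "cinner x y"] by linarith
  have 4: "(cnorm (x + y))\<^sup>2 \<le> (cnorm x)\<^sup>2 + (cnorm y)\<^sup>2 + 2 * (cnorm x * cnorm y)"
    unfolding cnorm_sq using 1 2 3 by linarith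
  have "(cnorm (x + y))\<^sup>2 \<le> (cnorm x + cnorm y)\<^sup>2"
    using 4 by (simp only: power2_sum)
  then show ?thesis by (rule power2_le_imp_le) simp
qed

lemma cnorm_triangle_diff: "cnorm (x - z) \<le> cnorm (x - y) + cnorm (y - (z::'a::complex_hilbert))"
  using cnorm_triangle[of "x - y" "y - z"] by simp

lemma cnorm_diff_tendsto_cinner_left:
  assumes "(\<lambda>n. cnorm (s n - (a::'a::complex_hilbert))) \<longlonglongrightarrow> 0"
  shows "(\<lambda>n. cinner (s n) z) \<longlonglongrightarrow> cinner a z"
proof -
  have l: "(\<lambda>n. cnorm (s n - a) * cnorm z) \<longlonglongrightarrow> 0"
    using tendsto_mult[OF assms tendsto_const[of "cnorm z"]] by simp
  have b: "cmod (cinner (s n) z - cinner a z) \<le> cnorm (s n - a) * cnorm z" for n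
    using cauchy_schwarz[of "s n - a" z] by (simp add: cinner_diff_left)
  have "(\<lambda>n. cinner (s n) z - cinner a z) \<longlonglongrightarrow> 0"
    by (intro tendsto_0_le[where K=1, OF l] always_eventually) (simp add: b)
  then show ?thesis by (simp add: LIM_zero_iff)
qed

lemma cnorm_diff_tendsto_cinner_right:
  assumes "(\<lambda>n. cnorm (s n - (a::'a::complex_hilbert))) \<longlonglongrightarrow> 0"
  shows "(\<lambda>n. cinner z (s n)) \<longlonglongrightarrow> cinner z a"
proof -
  have "(\<lambda>n. cnj (cinner (s n) z)) \<longlonglongrightarrow> cnj (cinner a z)"
    by (rule tendsto_cnj[OF cnorm_diff_tendsto_cinner_left[OF assms]])
  then show ?thesis by (simp add: cinner_conj_sym[of z])
qed

lemma cnorm_limit_unique: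
  assumes "(\<lambda>n. cnorm (s n - (a::'a::complex_hilbert))) \<longlonglongrightarrow> 0"
    and "(\<lambda>n. cnorm (s n - b)) \<longlonglongrightarrow> 0"
  shows "a = b"
proof -
  have "(\<lambda>n. cnorm (s n - a) + cnorm (s n - b)) \<longlonglongrightarrow> 0"
    using tendsto_add[OF assms] by simp
  moreover have "cnorm (a - b) \<le> cnorm (s n - a) + cnorm (s n - b)" for n
    using cnorm_triangle_diff[of a b "s n"] by (simp add: cnorm_minus_commute)
  ultimately have "cnorm (a - b) \<le> 0"
    by (intro tendsto_le[OF _ _ tendsto_const]) (auto intro!: always_eventually)
  then show ?thesis using cnorm_nonneg[of "a-b"] by simp
qed

definition orthonormal :: "(nat \<Rightarrow> 'a::complex_hilbert) \<Rightarrow> bool" where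
  "orthonormal e \<longleftrightarrow> (\<forall>n m. cinner (e n) (e m) = (if n = m then 1 else 0))"

lemma ONB_orthonormal: "ONB e \<Longrightarrow> orthonormal e"
  by (simp add: ONB_def orthonormal_def)

lemma comb_inner:
  assumes "orthonormal e" "finite A"
  shows "cinner (\<Sum>k\<in>A. c k *\<^sub>C e k) (e m) = (if m \<in> A then c m else 0)"
proof -
  have "cinner (\<Sum>k\<in>A. c k *\<^sub>C e k) (e m) = (\<Sum>k\<in>A. if k = m then c k else 0)"
    using assms(1) by (auto simp: cinner_sum_left cinner_scaleC_left orthonormal_def intro!: sum.cong)
  also have "\<dots> = (if m \<in> A then c m else 0)" using assms(2) by (simp add: sum.delta')
  finally show ?thesis .
qed

lemma comb_inner_right:
  shows "cinner x (\<Sum>k\<in>A. c k *\<^sub>C e k) = (\<Sum>k\<in>A. cnj (c k) * cinner x (e k))"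
  by (simp add: cinner_sum_right cinner_scaleC_right)

lemma comb_norm:
  assumes "orthonormal e" "finite A"
  shows "cinner (\<Sum>k\<in>A. c k *\<^sub>C e k) (\<Sum>k\<in>A. c k *\<^sub>C e k) = (\<Sum>k\<in>A. complex_of_real ((cmod (c k))\<^sup>2))"
proof -
  have "cinner (\<Sum>k\<in>A. c k *\<^sub>C e k) (\<Sum>k\<in>A. c k *\<^sub>C e k) = (\<Sum>k\<in>A. cnj (c k) * c k)"
    unfolding comb_inner_right using assms by (intro sum.cong) (auto simp: comb_inner)
  also have "\<dots> = (\<Sum>k\<in>A. complex_of_real ((cmod (c k))\<^sup>2))"
    by (intro sum.cong refl) (metis complex_norm_square mult.commute of_real_power)
  finally show ?thesis .
qed

lemma comb_cnorm_sq:
  assumes "orthonormal e" "finite A"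
  shows "(cnorm (\<Sum>k\<in>A. c k *\<^sub>C e k))\<^sup>2 = (\<Sum>k\<in>A. (cmod (c k))\<^sup>2)"
  unfolding cnorm_sq comb_norm[OF assms] by (simp del: of_real_power)

definition proj :: "(nat \<Rightarrow> 'a::complex_hilbert) \<Rightarrow> nat \<Rightarrow> 'a \<Rightarrow> 'a" where
  "proj e n a = (\<Sum>k<n. cinner a (e k) *\<^sub>C e k)"

lemma proj_perp:
  assumes "orthonormal e" "m < n"
  shows "cinner (a - proj e n a) (e m) = 0"
  using assms comb_inner[OF assms(1) finite_lessThan, of "\<lambda>k. cinner a (e k)" n m]
  by (simp add: proj_def cinner_diff_left)

lemma proj_perp_comb:
  assumes "orthonormal e"
  shows "cinner (a - proj e n a) (\<Sum>k<n. c k *\<^sub>C e k) = 0"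
  unfolding comb_inner_right using assms by (simp add: proj_perp)

lemma proj_best:
  assumes "orthonormal e"
  shows "cnorm (a - proj e n a) \<le> cnorm (a - (\<Sum>k<n. c k *\<^sub>C e k))"
proof -
  define v where "v = (\<Sum>k<n. c k *\<^sub>C e k)"
  define u where "u = a - proj e n a"
  define w where "w = (\<Sum>k<n. (cinner a (e k) - c k) *\<^sub>C e k)"
  have w': "w = proj e n a - v"
    unfolding w_def proj_def v_def scaleC_diff_left by (rule sum_subtractf)
  have uw: "cinner u w = 0" unfolding u_def w_def using assms by (rule proj_perp_comb)
  have wu: "cinner w u = 0" using uw cinner_conj_sym[of w u] by simp
  have auw: "a - v = u + w" unfolding u_def w' by simp
  have "(cnorm (a - v))\<^sup>2 = Re (cinner u u) + Re (cinner w w)"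
    unfolding auw cnorm_sq by (simp add: cinner_add_left cinner_add_right uw wu)
  moreover have "Re (cinner w w) \<ge> 0" by (rule cinner_nonneg)
  ultimately have "(cnorm u)\<^sup>2 \<le> (cnorm (a - v))\<^sup>2" unfolding cnorm_sq by linarith
  then show ?thesis unfolding u_def v_def by (rule power2_le_imp_le) simp
qed

lemma span_as_prefix:
  assumes "y \<in> seq_span e"
  shows "\<exists>N. \<forall>n\<ge>N. \<exists>c. y = (\<Sum>k<n. c k *\<^sub>C e k)"
proof -
  obtain F c where F: "finite F" "y = (\<Sum>i\<in>F. c i *\<^sub>C e i)"
    using assms unfolding seq_span_def by blast
  obtain N where N: "F \<subseteq> {..<N}" using F(1) finite_nat_set_iff_bounded by (auto simp: lessThan_def)
  have P: "y = (\<Sum>k<n. (if k \<in> F then c k else 0) *\<^sub>C e k)" if "n \<ge> N" for n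
  proof -
    have "(\<Sum>k<n. (if k \<in> F then c k else 0) *\<^sub>C e k) = (\<Sum>k<n. if k \<in> F then c k *\<^sub>C e k else 0)"
      by (intro sum.cong) auto
    also have "\<dots> = (\<Sum>k\<in>{..<n} \<inter> F. c k *\<^sub>C e k)" by (simp add: sum.inter_restrict)
    also have "{..<n} \<inter> F = F" using N that by auto
    finally show ?thesis using F by simp
  qed
  show ?thesis
    by (intro exI[of _ N] allI impI exI[of _ "\<lambda>k. if k \<in> F then c k else 0"]) (erule P)
qed

lemma proj_tendsto:
  assumes "ONB e"
  shows "(\<lambda>n. cnorm (proj e n a - a)) \<longlonglongrightarrow> 0"
proof (rule LIMSEQ_I)
  fix r :: real assume r: "r > 0"
  have "a \<in> hclosure (seq_span e)" using assms by (simp add: ONB_def hdense_def)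
  then obtain y where y: "y \<in> seq_span e" "cnorm (a - y) < r" using r unfolding hclosure_def by blast
  obtain N where N: "\<forall>n\<ge>N. \<exists>c. y = (\<Sum>k<n. c k *\<^sub>C e k)" using span_as_prefix[OF y(1)] by blast
  have "norm (cnorm (proj e n a - a) - 0) < r" if nN: "n \<ge> N" for n
  proof -
    obtain c where c: "y = (\<Sum>k<n. c k *\<^sub>C e k)" using N nN by blast
    have "cnorm (a - proj e n a) \<le> cnorm (a - y)"
      unfolding c by (rule proj_best[OF ONB_orthonormal[OF assms]])
    then show ?thesis using y(2) by (simp add: cnorm_minus_commute)
  qed
  then show "\<exists>N. \<forall>n\<ge>N. norm (cnorm (proj e n a - a) - 0) < r" by blast
qed

lemma parseval:
  assumes "ONB e"
  shows "(\<lambda>k. cinner a (e k) * cinner (e k) b) sums cinner a b"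
proof -
  have "(\<lambda>n. cinner (proj e n a) b) \<longlonglongrightarrow> cinner a b"
    by (rule cnorm_diff_tendsto_cinner_left[OF proj_tendsto[OF assms]])
  moreover have "cinner (proj e n a) b = (\<Sum>k<n. cinner a (e k) * cinner (e k) b)" for n
    by (simp add: proj_def cinner_sum_left cinner_scaleC_left)
  ultimately show ?thesis by (simp add: sums_def)
qed

lemma ONB_zero:
  assumes "ONB e" "\<And>m. cinner w (e m) = 0"
  shows "w = 0"
proof -
  have "(\<lambda>k. 0) sums cinner w w" using parseval[OF assms(1), of w w] assms(2) by simp
  then have "cinner w w = 0" using sums_unique2 sums_zero by blast
  then show ?thesis by (rule cinner_eq_zero)
qed

lemma comb_exists:
  assumes "orthonormal e" "summable (\<lambda>k. (cmod (c k))\<^sup>2)"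
  shows "\<exists>y. (\<lambda>n. cnorm ((\<Sum>k<n. c k *\<^sub>C e k) - y)) \<longlonglongrightarrow> 0"
proof -
  define X where "X n = (\<Sum>k<n. c k *\<^sub>C e k)" for n
  have diff: "cnorm (X m - X n) = sqrt (\<Sum>k\<in>{n..<m}. (cmod (c k))\<^sup>2)" if "n \<le> m" for m n
  proof -
    have "X m - X n = (\<Sum>k\<in>{n..<m}. c k *\<^sub>C e k)"
      unfolding X_def using that by (metis sum_diff_nat_ivl lessThan_atLeast0 zero_le)
    then have "(cnorm (X m - X n))\<^sup>2 = (\<Sum>k\<in>{n..<m}. (cmod (c k))\<^sup>2)"
      using comb_cnorm_sq[OF assms(1)] by simp
    then show ?thesis by (metis cnorm_nonneg real_sqrt_unique)
  qed
  have C: "\<forall>r>0. \<exists>N. \<forall>m\<ge>N. \<forall>n\<ge>N. cnorm (X m - X n) < r"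
  proof (intro allI impI)
    fix r :: real assume r: "r > 0"
    then obtain N where N: "\<forall>m\<ge>N. \<forall>n. norm (\<Sum>k\<in>{m..<n}. (cmod (c k))\<^sup>2) < r\<^sup>2"
      using assms(2) unfolding summable_Cauchy by (meson zero_less_power)
    have "cnorm (X m - X n) < r" if "m \<ge> N" "n \<ge> N" for m n
    proof (cases "n \<le> m")
      case True
      have "norm (\<Sum>k\<in>{n..<m}. (cmod (c k))\<^sup>2) < r\<^sup>2" using N that(2) by blast
      then have "(\<Sum>k\<in>{n..<m}. (cmod (c k))\<^sup>2) < r\<^sup>2" by (metis abs_ge_self le_less_trans real_norm_def)
      then have "sqrt (\<Sum>k\<in>{n..<m}. (cmod (c k))\<^sup>2) < sqrt (r\<^sup>2)" by (rule real_sqrt_less_mono)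
      then show ?thesis using diff[OF True] r by simp
    next
      case False
      have "norm (\<Sum>k\<in>{m..<n}. (cmod (c k))\<^sup>2) < r\<^sup>2" using N that(1) by blast
      then have "(\<Sum>k\<in>{m..<n}. (cmod (c k))\<^sup>2) < r\<^sup>2" by (metis abs_ge_self le_less_trans real_norm_def)
      then have "sqrt (\<Sum>k\<in>{m..<n}. (cmod (c k))\<^sup>2) < sqrt (r\<^sup>2)" by (rule real_sqrt_less_mono)
      then show ?thesis using diff[of m n] False r cnorm_minus_commute[of "X m" "X n"] by simp
    qed
    then show "\<exists>N. \<forall>m\<ge>N. \<forall>n\<ge>N. cnorm (X m - X n) < r" by blast
  qed
  then obtain L where "(\<lambda>n. cnorm (X n - L)) \<longlonglongrightarrow> 0"
    using hilbert_complete[of X] unfolding cnorm_def by blast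
  then show ?thesis unfolding X_def by blast
qed

lemma adjointD: "(y, z) \<in> adjoint G \<Longrightarrow> (x, w) \<in> G \<Longrightarrow> cinner w y = cinner x z"
  unfolding adjoint_def by blast

lemma adjointI: "(\<And>x w. (x, w) \<in> G \<Longrightarrow> cinner w y = cinner x z) \<Longrightarrow> (y, z) \<in> adjoint G"
  unfolding adjoint_def by blast

lemma quasi_basis_sym: "quasi_basis D \<phi> \<psi> \<Longrightarrow> quasi_basis D \<psi> \<phi>"
  unfolding quasi_basis_def
proof (intro ballI)
  fix x y assume A: "\<forall>x\<in>D. \<forall>y\<in>D. (\<lambda>k. cinner x (\<phi> k) * cinner (\<psi> k) y) sums cinner x y"
    and xy: "x \<in> D" "y \<in> D"
  then have "(\<lambda>k. cinner y (\<phi> k) * cinner (\<psi> k) x) sums cinner y x" by blast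
  then have "(\<lambda>k. cnj (cinner y (\<phi> k) * cinner (\<psi> k) x)) sums cnj (cinner y x)"
    by (simp only: sums_cnj)
  moreover have "cnj (cinner y (\<phi> k) * cinner (\<psi> k) x) = cinner x (\<psi> k) * cinner (\<phi> k) y" for k
    by (simp add: cinner_conj_sym[of y] cinner_conj_sym[of "\<psi> k"])
  moreover have "cnj (cinner y x) = cinner x y" by (simp add: cinner_conj_sym[of y])
  ultimately show "(\<lambda>k. cinner x (\<psi> k) * cinner (\<phi> k) y) sums cinner x y" by simp
qed

lemma biorthogonal_sym: "biorthogonal \<phi> \<psi> \<Longrightarrow> biorthogonal \<psi> \<phi>"
  unfolding biorthogonal_def by (metis cinner_conj_sym complex_cnj_one complex_cnj_zero)

lemma backward:
  assumes e: "ONB e" and nat: "natural_pair e T \<phi> \<psi>"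
    and DT: "D \<subseteq> Domain (adjoint T) \<inter> Range T"
  shows "quasi_basis D \<phi> \<psi>"
  unfolding quasi_basis_def
proof (intro ballI)
  fix x y assume x: "x \<in> D" and y: "y \<in> D"
  obtain z where z: "(x, z) \<in> adjoint T" using DT x by blast
  obtain w where w: "(w, y) \<in> T" using DT y by blast
  have Te: "(e k, \<phi> k) \<in> T" and Ae: "(e k, \<psi> k) \<in> adjoint (converse T)" for k
    using nat by (auto simp: natural_pair_def constructing_pair_def)
  have 1: "cinner x (\<phi> k) = cinner z (e k)" for k
    using adjointD[OF z Te[of k]] by (metis cinner_conj_sym)
  have 2: "cinner (\<psi> k) y = cinner (e k) w" for k
    using adjointD[OF Ae[of k], of y w] w by (metis cinner_conj_sym converse_iff)
  have 3: "cinner x y = cinner z w"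
    using adjointD[OF z w] by (metis cinner_conj_sym)
  show "(\<lambda>k. cinner x (\<phi> k) * cinner (\<psi> k) y) sums cinner x y"
    unfolding 1 2 3 by (rule parseval[OF e])
qed

lemma gcI: "(\<And>e. e > 0 \<Longrightarrow> \<exists>u v. (u, v) \<in> G \<and> cnorm (x - u) < e \<and> cnorm (y - v) < e)
   \<Longrightarrow> (x, y) \<in> graph_closure G"
  unfolding graph_closure_def by blast

lemma gcD: "(x, y) \<in> graph_closure G \<Longrightarrow> e > 0 \<Longrightarrow> \<exists>u v. (u, v) \<in> G \<and> cnorm (x - u) < e \<and> cnorm (y - v) < e"
  unfolding graph_closure_def by blast

lemma gc_sub: "G \<subseteq> graph_closure G"
  unfolding graph_closure_def by force

lemma gc_converse: "graph_closure (converse G) = converse (graph_closure G)"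
  unfolding graph_closure_def by fastforce

lemma gc_idem: "graph_closure (graph_closure G) = graph_closure (G::('a::complex_hilbert \<times> 'a) set)"
proof
  show "graph_closure G \<subseteq> graph_closure (graph_closure G)" by (rule gc_sub)
next
  show "graph_closure (graph_closure G) \<subseteq> graph_closure G"
  proof (clarify)
    fix x y assume A: "(x, y) \<in> graph_closure (graph_closure G)"
    have "\<exists>u v. (u, v) \<in> G \<and> cnorm (x - u) < e \<and> cnorm (y - v) < e" if e: "e > 0" for e
    proof -
      obtain u v where uv: "(u, v) \<in> graph_closure G" "cnorm (x - u) < e/2" "cnorm (y - v) < e/2"
        using gcD[OF A, of "e/2"] e by auto
      obtain u' v' where uv': "(u', v') \<in> G" "cnorm (u - u') < e/2" "cnorm (v - v') < e/2"
        using gcD[OF uv(1), of "e/2"] e by auto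
      have "cnorm (x - u') < e" using cnorm_triangle_diff[of x u' u] uv uv' by linarith
      moreover have "cnorm (y - v') < e" using cnorm_triangle_diff[of y v' v] uv uv' by linarith
      ultimately show ?thesis using uv' by blast
    qed
    then show "(x, y) \<in> graph_closure G" by (rule gcI)
  qed
qed

lemma gc_adjoint: "adjoint G \<subseteq> adjoint (graph_closure (G::('a::complex_hilbert \<times> 'a) set))"
proof (clarify)
  fix a b assume ab: "(a, b) \<in> adjoint G"
  show "(a, b) \<in> adjoint (graph_closure G)"
  proof (rule adjointI, rule ccontr)
    fix x w assume xw: "(x, w) \<in> graph_closure G" and ne: "cinner w a \<noteq> cinner x b"
    define d where "d = cinner w a - cinner x b"
    define K where "K = cnorm a + cnorm b + 1"
    have dpos: "cmod d > 0" using ne by (simp add: d_def)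
    have Kpos: "K > 0" by (simp add: K_def add_nonneg_pos)
    define e where "e = cmod d / K"
    have epos: "e > 0" using dpos Kpos by (simp add: e_def)
    obtain u v where uv: "(u, v) \<in> G" "cnorm (x - u) < e" "cnorm (w - v) < e"
      using gcD[OF xw epos] by blast
    have vu: "cinner v a = cinner u b" using adjointD[OF ab uv(1)] .
    have "d = cinner (w - v) a - cinner (x - u) b"
      by (simp add: d_def cinner_diff_left vu)
    then have "cmod d \<le> cmod (cinner (w - v) a) + cmod (cinner (x - u) b)"
      by (metis norm_triangle_ineq4)
    also have "\<dots> \<le> cnorm (w - v) * cnorm a + cnorm (x - u) * cnorm b"
      by (intro add_mono cauchy_schwarz)
    also have "\<dots> \<le> e * cnorm a + e * cnorm b"
      using uv by (intro add_mono mult_right_mono) auto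
    also have "\<dots> < e * K" using epos by (simp add: K_def algebra_simps)
    also have "\<dots> = cmod d" using Kpos by (simp add: e_def)
    finally show False by simp
  qed
qed

lemma gc_add:
  assumes "\<And>x y u v. (x, y) \<in> G \<Longrightarrow> (u, v) \<in> G \<Longrightarrow> (x + u, y + v) \<in> G"
    and "(x, y) \<in> graph_closure G" "(u, v) \<in> graph_closure (G::('a::complex_hilbert \<times> 'a) set)"
  shows "(x + u, y + v) \<in> graph_closure G"
proof (rule gcI)
  fix e :: real assume e: "e > 0"
  obtain x' y' where 1: "(x', y') \<in> G" "cnorm (x - x') < e/2" "cnorm (y - y') < e/2"
    using gcD[OF assms(2), of "e/2"] e by auto
  obtain u' v' where 2: "(u', v') \<in> G" "cnorm (u - u') < e/2" "cnorm (v - v') < e/2"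
    using gcD[OF assms(3), of "e/2"] e by auto
  have "cnorm (x + u - (x' + u')) < e"
    using cnorm_triangle[of "x - x'" "u - u'"] 1 2 by (simp add: algebra_simps)
  moreover have "cnorm (y + v - (y' + v')) < e"
    using cnorm_triangle[of "y - y'" "v - v'"] 1 2 by (simp add: algebra_simps)
  ultimately show "\<exists>p q. (p, q) \<in> G \<and> cnorm (x + u - p) < e \<and> cnorm (y + v - q) < e"
    using assms(1)[OF 1(1) 2(1)] by blast
qed

lemma gc_scale:
  assumes "\<And>a x y. (x, y) \<in> G \<Longrightarrow> (a *\<^sub>C x, a *\<^sub>C y) \<in> G"
    and "(x, y) \<in> graph_closure (G::('a::complex_hilbert \<times> 'a) set)"
  shows "(a *\<^sub>C x, a *\<^sub>C y) \<in> graph_closure G"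
proof (rule gcI)
  fix e :: real assume e: "e > 0"
  define e' where "e' = e / (cmod a + 1)"
  have e': "e' > 0" using e by (simp add: e'_def add_nonneg_pos)
  obtain x' y' where 1: "(x', y') \<in> G" "cnorm (x - x') < e'" "cnorm (y - y') < e'"
    using gcD[OF assms(2) e'] by blast
  have bnd: "cmod a * t < e" if "t < e'" "t \<ge> 0" for t
  proof -
    have "cmod a * t \<le> cmod a * e'" using that by (simp add: mult_left_mono)
    also have "\<dots> < (cmod a + 1) * e'" using e' by (simp add: algebra_simps)
    also have "\<dots> = e"
    proof -
      have "cmod a + 1 \<noteq> 0" using norm_ge_zero[of a] by linarith
      then show ?thesis unfolding e'_def by simp
    qed
    finally show ?thesis .
  qed
  have "cnorm (a *\<^sub>C x - a *\<^sub>C x') < e"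
    using bnd[of "cnorm (x - x')"] 1 by (simp add: scaleC_diff_right[symmetric] cnorm_scaleC)
  moreover have "cnorm (a *\<^sub>C y - a *\<^sub>C y') < e"
    using bnd[of "cnorm (y - y')"] 1 by (simp add: scaleC_diff_right[symmetric] cnorm_scaleC)
  ultimately show "\<exists>p q. (p, q) \<in> G \<and> cnorm (a *\<^sub>C x - p) < e \<and> cnorm (a *\<^sub>C y - q) < e"
    using assms(1)[OF 1(1)] by blast
qed

lemma hdense_mono: "hdense A \<Longrightarrow> A \<subseteq> B \<Longrightarrow> hdense B"
  unfolding hdense_def hclosure_def by blast

lemma dense_zero:
  assumes "hdense D" "\<And>y. y \<in> D \<Longrightarrow> cinner v y = 0"
  shows "v = (0::'a::complex_hilbert)"
proof (rule ccontr)
  assume "v \<noteq> 0"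
  then have n: "cnorm v > 0" using cnorm_nonneg[of v] cnorm_eq_0[of v] by linarith
  have "v \<in> hclosure D" using assms(1) by (simp add: hdense_def)
  then have "\<forall>e>0. \<exists>y\<in>D. cnorm (v - y) < e" unfolding hclosure_def by simp
  then obtain y where y: "y \<in> D" "cnorm (v - y) < cnorm v / 2" using n half_gt_zero by blast
  have "cinner v v = cinner v (v - y)" using assms(2)[OF y(1)] by (simp add: cinner_diff_right)
  then have "(cnorm v)\<^sup>2 = Re (cinner v (v - y))" by (simp add: cnorm_sq)
  also have "\<dots> \<le> cmod (cinner v (v - y))" by (rule complex_Re_le_cmod)
  also have "\<dots> \<le> cnorm v * cnorm (v - y)" by (rule cauchy_schwarz)
  also have "\<dots> \<le> cnorm v * (cnorm v / 2)" using y n by (simp add: mult_left_mono)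
  finally show False using n by (simp add: power2_eq_square)
qed

lemma Tseq_exists:
  assumes "orthonormal e" "x \<in> seq_dom f"
  shows "\<exists>y. (x, y) \<in> T_seq e f"
proof -
  have "summable (\<lambda>k. (cmod (cinner x (f k)))\<^sup>2)" using assms(2) by (simp add: seq_dom_def)
  from comb_exists[OF assms(1) this] obtain y where
    "(\<lambda>n. cnorm ((\<Sum>k<n. cinner x (f k) *\<^sub>C e k) - y)) \<longlonglongrightarrow> 0" by blast
  then show ?thesis using assms(2) unfolding T_seq_def by blast
qed

lemma Tseq_D:
  assumes "(x, y) \<in> T_seq e f"
  shows "x \<in> seq_dom f" "(\<lambda>n. cnorm ((\<Sum>k<n. cinner x (f k) *\<^sub>C e k) - y)) \<longlonglongrightarrow> 0"
  using assms unfolding T_seq_def by auto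

lemma Tseq_inner:
  assumes "orthonormal e" "(x, y) \<in> T_seq e f"
  shows "cinner y (e m) = cinner x (f m)"
proof -
  have 1: "(\<lambda>n. cinner (\<Sum>k<n. cinner x (f k) *\<^sub>C e k) (e m)) \<longlonglongrightarrow> cinner y (e m)"
    by (rule cnorm_diff_tendsto_cinner_left[OF Tseq_D(2)[OF assms(2)]])
  have "eventually (\<lambda>n. cinner (\<Sum>k<n. cinner x (f k) *\<^sub>C e k) (e m) = cinner x (f m)) sequentially"
    unfolding eventually_sequentially
    by (rule exI[of _ "Suc m"]) (simp add: comb_inner[OF assms(1)])
  then have 2: "(\<lambda>n. cinner (\<Sum>k<n. cinner x (f k) *\<^sub>C e k) (e m)) \<longlonglongrightarrow> cinner x (f m)"
    by (rule tendsto_eventually)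
  show ?thesis using 1 2 LIMSEQ_unique by blast
qed

lemma Tseq_zero: "(0, 0) \<in> T_seq e f"
  unfolding T_seq_def seq_dom_def by simp

locale fwd =
  fixes e \<phi> \<psi> :: "nat \<Rightarrow> 'a::complex_hilbert" and D :: "'a set"
  assumes e: "ONB e" and qb: "quasi_basis D \<phi> \<psi>" and bio: "biorthogonal \<phi> \<psi>"
    and sub: "csubspace D" and dense: "hdense D" and phiD: "\<And>n. \<phi> n \<in> D"
    and Ddom: "D \<subseteq> seq_dom \<phi> \<inter> seq_dom \<psi>"
begin

lemma on: "orthonormal e" using e by (rule ONB_orthonormal)

definition "G = restrict_op (T_seq e \<psi>) D"
definition "C = graph_closure G"

lemma G_iff: "(x, y) \<in> G \<longleftrightarrow> x \<in> D \<and> (x, y) \<in> T_seq e \<psi>"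
  unfolding G_def restrict_op_def by auto

lemma G_exists: "x \<in> D \<Longrightarrow> \<exists>y. (x, y) \<in> G"
  using Tseq_exists[OF on, of x \<psi>] Ddom G_iff by blast

lemma G_inner: "(x, y) \<in> G \<Longrightarrow> cinner y (e m) = cinner x (\<psi> m)"
  using Tseq_inner[OF on] G_iff by blast

lemma S'_exists: "y \<in> D \<Longrightarrow> \<exists>z. (y, z) \<in> T_seq e \<phi>"
  using Tseq_exists[OF on, of y \<phi>] Ddom by blast

lemma pair_identity:
  assumes "(x, y) \<in> G" "(u, v) \<in> T_seq e \<phi>" "u \<in> D"
  shows "cinner y v = cinner x u"
proof -
  have xD: "x \<in> D" and xy: "(x, y) \<in> T_seq e \<psi>" using assms(1) G_iff by auto
  have 1: "(\<lambda>n. cinner (\<Sum>k<n. cinner x (\<psi> k) *\<^sub>C e k) v) \<longlonglongrightarrow> cinner y v"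
    by (rule cnorm_diff_tendsto_cinner_left[OF Tseq_D(2)[OF xy]])
  have ev: "cinner (e k) v = cinner (\<phi> k) u" for k
    using Tseq_inner[OF on assms(2), of k] cinner_conj_sym[of "e k" v] cinner_conj_sym[of "\<phi> k" u] by simp
  have "cinner (\<Sum>k<n. cinner x (\<psi> k) *\<^sub>C e k) v = (\<Sum>k<n. cinner x (\<psi> k) * cinner (\<phi> k) u)" for n
    by (simp add: cinner_sum_left cinner_scaleC_left ev)
  with 1 have "(\<lambda>k. cinner x (\<psi> k) * cinner (\<phi> k) u) sums cinner y v"
    by (simp add: sums_def)
  moreover have "(\<lambda>k. cinner x (\<psi> k) * cinner (\<phi> k) u) sums cinner x u"
    using quasi_basis_sym[OF qb] xD assms(3) unfolding quasi_basis_def by blast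
  ultimately show ?thesis by (rule sums_unique2)
qed

lemma G_add: "(x, y) \<in> G \<Longrightarrow> (u, v) \<in> G \<Longrightarrow> (x + u, y + v) \<in> G"
proof -
  assume 1: "(x, y) \<in> G" and 2: "(u, v) \<in> G"
  have "x + u \<in> D" using 1 2 sub G_iff unfolding csubspace_def by blast
  then obtain w where w: "(x + u, w) \<in> G" using G_exists by blast
  have "w - (y + v) = 0"
  proof (rule ONB_zero[OF e])
    fix m show "cinner (w - (y + v)) (e m) = 0"
      using G_inner[OF w, of m] G_inner[OF 1, of m] G_inner[OF 2, of m]
      by (simp add: cinner_diff_left cinner_add_left)
  qed
  then show ?thesis using w by simp
qed

lemma G_scale: "(x, y) \<in> G \<Longrightarrow> (a *\<^sub>C x, a *\<^sub>C y) \<in> G"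
proof -
  assume 1: "(x, y) \<in> G"
  have "a *\<^sub>C x \<in> D" using 1 sub G_iff unfolding csubspace_def by blast
  then obtain w where w: "(a *\<^sub>C x, w) \<in> G" using G_exists by blast
  have "w - a *\<^sub>C y = 0"
  proof (rule ONB_zero[OF e])
    fix m show "cinner (w - a *\<^sub>C y) (e m) = 0"
      using G_inner[OF w, of m] G_inner[OF 1, of m]
      by (simp add: cinner_diff_left cinner_scaleC_left)
  qed
  then show ?thesis using w by simp
qed

lemma G_zero: "(0, 0) \<in> G"
  using G_iff Tseq_zero sub unfolding csubspace_def by blast

lemma C_add: "(x, y) \<in> C \<Longrightarrow> (u, v) \<in> C \<Longrightarrow> (x + u, y + v) \<in> C"
  unfolding C_def by (rule gc_add[OF G_add])

lemma C_scale: "(x, y) \<in> C \<Longrightarrow> (a *\<^sub>C x, a *\<^sub>C y) \<in> C"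
  unfolding C_def by (rule gc_scale[OF G_scale])

lemma GC: "G \<subseteq> C" unfolding C_def by (rule gc_sub)

lemma C_zero: "(0, 0) \<in> C" using G_zero GC by blast

lemma adj_e: "(e m, \<psi> m) \<in> adjoint C"
proof -
  have "(e m, \<psi> m) \<in> adjoint G" by (rule adjointI) (rule G_inner)
  then show ?thesis unfolding C_def using gc_adjoint by blast
qed

lemma adj_D:
  assumes "y \<in> D" "(y, z) \<in> T_seq e \<phi>"
  shows "(z, y) \<in> adjoint C"
proof -
  have "(z, y) \<in> adjoint G" by (rule adjointI) (rule pair_identity[OF _ assms(2,1)])
  then show ?thesis unfolding C_def using gc_adjoint by blast
qed

lemma C_inner: "(x, w) \<in> C \<Longrightarrow> cinner w (e m) = cinner x (\<psi> m)"
  using adjointD[OF adj_e] by blast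

lemma C_single: "(x, y) \<in> C \<Longrightarrow> (x, z) \<in> C \<Longrightarrow> y = z"
proof -
  assume 1: "(x, y) \<in> C" and 2: "(x, z) \<in> C"
  have "y - z = 0"
  proof (rule ONB_zero[OF e])
    fix m show "cinner (y - z) (e m) = 0"
      using C_inner[OF 1, of m] C_inner[OF 2, of m] by (simp add: cinner_diff_left)
  qed
  then show ?thesis by simp
qed

lemma C_inj: "(x, w) \<in> C \<Longrightarrow> (x', w) \<in> C \<Longrightarrow> x = x'"
proof -
  assume 1: "(x, w) \<in> C" and 2: "(x', w) \<in> C"
  have "x - x' = 0"
  proof (rule dense_zero[OF dense])
    fix y assume y: "y \<in> D"
    then obtain z where z: "(y, z) \<in> T_seq e \<phi>" using S'_exists by blast
    show "cinner (x - x') y = 0"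
      using adjointD[OF adj_D[OF y z] 1] adjointD[OF adj_D[OF y z] 2]
      by (simp add: cinner_diff_left)
  qed
  then show ?thesis by simp
qed

lemma C_op: "is_operator C"
  unfolding is_operator_def using C_single C_zero C_add C_scale by blast

lemma C_conv_op: "is_operator (converse C)"
proof -
  have "(-1) *\<^sub>C x \<in> UNIV" for x :: 'a by simp
  show ?thesis unfolding is_operator_def
    using C_inj C_zero C_add C_scale by auto
qed

lemma C_closed: "graph_closure C = C"
  unfolding C_def by (rule gc_idem)

lemma G_phi: "(\<phi> m, e m) \<in> G"
proof -
  obtain y where y: "(\<phi> m, y) \<in> G" using G_exists phiD by blast
  have "y - e m = 0"
  proof (rule ONB_zero[OF e])
    fix k show "cinner (y - e m) (e k) = 0"
      using G_inner[OF y, of k] bio on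
      by (simp add: cinner_diff_left biorthogonal_def orthonormal_def)
  qed
  then show ?thesis using y by simp
qed

lemma Range_span: "seq_span e \<subseteq> Range C"
proof
  fix y assume "y \<in> seq_span e"
  then obtain F c where F: "finite F" "y = (\<Sum>i\<in>F. c i *\<^sub>C e i)" unfolding seq_span_def by blast
  have "\<exists>x. (x, \<Sum>i\<in>F. c i *\<^sub>C e i) \<in> C" using F(1)
  proof (induction F rule: finite_induct)
    case empty then show ?case using C_zero by auto
  next
    case (insert i F)
    then obtain x where x: "(x, \<Sum>i\<in>F. c i *\<^sub>C e i) \<in> C" by blast
    have "(c i *\<^sub>C \<phi> i, c i *\<^sub>C e i) \<in> C" using C_scale GC G_phi by blast
    from C_add[OF this x] show ?case using insert by auto
  qed
  then show "y \<in> Range C" using F by blast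
qed

lemma Domain_D: "D \<subseteq> Domain C"
  using G_exists GC by blast

end

context fwd begin

lemma forward_main:
  "natural_pair e (converse C) \<phi> \<psi> \<and> D \<subseteq> Domain (adjoint (converse C)) \<inter> Range (converse C)"
proof -
  have cl: "closed_operator (converse C)"
    unfolding closed_operator_def using C_conv_op by (simp add: gc_converse C_closed)
  have d1: "densely_defined (converse C)"
    unfolding densely_defined_def using C_conv_op hdense_mono[OF _ Range_span] e
    by (simp add: ONB_def)
  have d2: "densely_defined (converse (converse C))"
    unfolding densely_defined_def using C_op hdense_mono[OF dense Domain_D] by simp
  have n: "(e n, \<phi> n) \<in> converse C \<and> e n \<in> Domain (adjoint (converse (converse C)))
           \<and> (e n, \<psi> n) \<in> adjoint (converse (converse C))" for n
    using G_phi GC adj_e by auto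
  have "D \<subseteq> Domain (adjoint (converse C))"
  proof
    fix y assume y: "y \<in> D"
    then obtain z where z: "(y, z) \<in> T_seq e \<phi>" using S'_exists by blast
    have "(y, z) \<in> adjoint (converse C)"
    proof (rule adjointI)
      fix x w assume "(x, w) \<in> converse C"
      then have "(w, x) \<in> C" by simp
      from adjointD[OF adj_D[OF y z] this] show "cinner w y = cinner x z" by simp
    qed
    then show "y \<in> Domain (adjoint (converse C))" by blast
  qed
  moreover have "D \<subseteq> Range (converse C)" using Domain_D by simp
  ultimately show ?thesis
    unfolding natural_pair_def constructing_pair_def using e cl d1 d2 n by blast
qed

end

lemma forward:
  assumes "ONB e" "quasi_basis D \<phi> \<psi>" "biorthogonal \<phi> \<psi>" "csubspace D" "hdense D"
    "seq_span \<phi> \<subseteq> D" "D \<subseteq> seq_dom \<phi> \<inter> seq_dom \<psi>"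
  shows "let T = converse (graph_closure (restrict_op (T_seq e \<psi>) D))
         in natural_pair e T \<phi> \<psi> \<and> D \<subseteq> Domain (adjoint T) \<inter> Range T"
proof -
  have "\<phi> n \<in> seq_span \<phi>" for n
    unfolding seq_span_def by (rule CollectI, rule exI[of _ "{n}"], rule exI[of _ "\<lambda>_. 1"]) (simp add: scaleC_one)
  then have "\<phi> n \<in> D" for n using assms(6) by blast
  then interpret fwd e \<phi> \<psi> D using assms by unfold_locales auto
  show ?thesis using forward_main unfolding C_def G_def Let_def by simp
qed

theorem corollary3p3:
  fixes \<phi> \<psi> :: "nat \<Rightarrow> 'a::complex_hilbert" and D :: "'a set"
  assumes separable: "\<exists>e::nat \<Rightarrow> 'a. ONB e"
    and bio: "biorthogonal \<phi> \<psi>"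
    and sub: "csubspace D" and dense: "hdense D"
    and incl1: "seq_span \<phi> \<union> seq_span \<psi> \<subseteq> D"
    and incl2: "D \<subseteq> seq_dom \<phi> \<inter> seq_dom \<psi>"
  shows "(quasi_basis D \<phi> \<psi> \<longleftrightarrow>
            (\<forall>e. ONB e \<longrightarrow> (\<exists>T. natural_pair e T \<phi> \<psi> \<and>
                                   D \<subseteq> Domain (adjoint T) \<inter> Range T)))
       \<and> (quasi_basis D \<phi> \<psi> \<longleftrightarrow>
            (\<forall>e. ONB e \<longrightarrow> (\<exists>K. natural_pair e K \<psi> \<phi> \<and>
                                   D \<subseteq> Domain (adjoint K) \<inter> Range K)))
       \<and> (quasi_basis D \<phi> \<psi> \<longrightarrow>
            (\<forall>e. ONB e \<longrightarrow>
               (let T = converse (graph_closure (restrict_op (T_seq e \<psi>) D))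
                in natural_pair e T \<phi> \<psi> \<and> D \<subseteq> Domain (adjoint T) \<inter> Range T)
             \<and> (let K = converse (graph_closure (restrict_op (T_seq e \<phi>) D))
                in natural_pair e K \<psi> \<phi> \<and> D \<subseteq> Domain (adjoint K) \<inter> Range K)))"
proof -
  obtain e0 :: "nat \<Rightarrow> 'a" where e0: "ONB e0" using separable by blast
  have bio': "biorthogonal \<psi> \<phi>" using bio by (rule biorthogonal_sym)
  have incl2': "D \<subseteq> seq_dom \<psi> \<inter> seq_dom \<phi>" using incl2 by blast
  have F1: "let T = converse (graph_closure (restrict_op (T_seq e \<psi>) D))
         in natural_pair e T \<phi> \<psi> \<and> D \<subseteq> Domain (adjoint T) \<inter> Range T"
    if "ONB e" "quasi_basis D \<phi> \<psi>" for e
    using forward[OF that bio sub dense _ incl2] incl1 by blast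
  have F2: "let K = converse (graph_closure (restrict_op (T_seq e \<phi>) D))
         in natural_pair e K \<psi> \<phi> \<and> D \<subseteq> Domain (adjoint K) \<inter> Range K"
    if "ONB e" "quasi_basis D \<phi> \<psi>" for e
    using forward[OF that(1) quasi_basis_sym[OF that(2)] bio' sub dense _ incl2'] incl1 by blast
  have A: "quasi_basis D \<phi> \<psi> \<longleftrightarrow>
            (\<forall>e. ONB e \<longrightarrow> (\<exists>T. natural_pair e T \<phi> \<psi> \<and> D \<subseteq> Domain (adjoint T) \<inter> Range T))"
  proof
    assume q: "quasi_basis D \<phi> \<psi>"
    show "\<forall>e. ONB e \<longrightarrow> (\<exists>T. natural_pair e T \<phi> \<psi> \<and> D \<subseteq> Domain (adjoint T) \<inter> Range T)"
      using F1[OF _ q] unfolding Let_def by blast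
  next
    assume "\<forall>e. ONB e \<longrightarrow> (\<exists>T. natural_pair e T \<phi> \<psi> \<and> D \<subseteq> Domain (adjoint T) \<inter> Range T)"
    then obtain T where "natural_pair e0 T \<phi> \<psi>" "D \<subseteq> Domain (adjoint T) \<inter> Range T" using e0 by blast
    then show "quasi_basis D \<phi> \<psi>" using backward[OF e0] by blast
  qed
  have B: "quasi_basis D \<phi> \<psi> \<longleftrightarrow>
            (\<forall>e. ONB e \<longrightarrow> (\<exists>K. natural_pair e K \<psi> \<phi> \<and> D \<subseteq> Domain (adjoint K) \<inter> Range K))"
  proof
    assume q: "quasi_basis D \<phi> \<psi>"
    show "\<forall>e. ONB e \<longrightarrow> (\<exists>K. natural_pair e K \<psi> \<phi> \<and> D \<subseteq> Domain (adjoint K) \<inter> Range K)"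
      using F2[OF _ q] unfolding Let_def by blast
  next
    assume "\<forall>e. ONB e \<longrightarrow> (\<exists>K. natural_pair e K \<psi> \<phi> \<and> D \<subseteq> Domain (adjoint K) \<inter> Range K)"
    then obtain K where "natural_pair e0 K \<psi> \<phi>" "D \<subseteq> Domain (adjoint K) \<inter> Range K" using e0 by blast
    then have "quasi_basis D \<psi> \<phi>" using backward[OF e0] by blast
    then show "quasi_basis D \<phi> \<psi>" by (rule quasi_basis_sym)
  qed
  show ?thesis using A B F1 F2 by blast
qed

end
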